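(* Let $(X,T),(Y,S)$ be topological dynamical systems and $f\in C(X\times Y)$. If $(Y,S)$ has the periodic specification property and $(X,T)$ has at least one periodic point, then $\beta(f)\ge\delta(f)$. In particular this holds if both $(X,T)$ and $(Y,S)$ have the periodic specification property.
   Context: A topological dynamical system $(X,T)$: $X$ compact metrizable, $T$ a homeomorphism. $\pi_Y(x,y)=y$, $\mathbb{A}_kf(x,y)=\frac1k\sum_{j=0}^{k-1}f(T^jx,S^jy)$; $R_f=\{(x,y):\lim_k\mathbb{A}_kf(x,y)\text{ exists}\}$; $\beta(f)=\sup_{y\in\pi_Y(R_f)}\inf_{x:(x,y)\in R_f}\lim_k\mathbb{A}_kf(x,y)$; $\delta(f)=\limsup_k\max_{y\in Y}\min_{x\in X}\mathbb{A}_kf(x,y)$. A specification is $\xi=(x_i,[a_i,b_i])_{i=1}^n$ with integers $a_1\le b_1<a_2\le\dots\le b_n$; $D$-spaced if $a_{i+1}-b_i\ge D$; $x$ $\eta$-traces $\xi$ if $d(T^jx,T^jx_i)<\eta$ for all $i$ and $j\in[a_i,b_i]$ ($d$ a compatible metric). Periodic specification property: for each $\eta>0$ there is $D(\eta)\in\mathbb{N}$ such that every $D(\eta)$-spaced specification has an $\eta$-tracing $x'$ with $T^{b_n-a_1+D(\eta)}x'=x'$. *)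

theory Defs
  imports "HOL-Analysis.Analysis"
begin

definition tds :: "'a::metric_space set \<Rightarrow> ('a \<Rightarrow> 'a) \<Rightarrow> bool" where
  "tds X T \<longleftrightarrow> compact X \<and> X \<noteq> {} \<and> (\<exists>g. homeomorphism X X T g)"

definition zit :: "'a set \<Rightarrow> ('a \<Rightarrow> 'a) \<Rightarrow> int \<Rightarrow> 'a \<Rightarrow> 'a" where
  "zit X T j x = (if 0 \<le> j then (T ^^ nat j) x else (inv_into X T ^^ nat (- j)) x)"

definition has_periodic_point :: "'a set \<Rightarrow> ('a \<Rightarrow> 'a) \<Rightarrow> bool" where
  "has_periodic_point X T \<longleftrightarrow> (\<exists>x\<in>X. \<exists>n::nat. n \<ge> 1 \<and> (T ^^ n) x = x)"

definition is_spec :: "'a set \<Rightarrow> ('a \<times> int \<times> int) list \<Rightarrow> bool" where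
  "is_spec X \<xi> \<longleftrightarrow> length \<xi> \<ge> 1
     \<and> (\<forall>i < length \<xi>. fst (\<xi> ! i) \<in> X \<and> fst (snd (\<xi> ! i)) \<le> snd (snd (\<xi> ! i)))
     \<and> (\<forall>i. i + 1 < length \<xi> \<longrightarrow> snd (snd (\<xi> ! i)) < fst (snd (\<xi> ! (i + 1))))"

definition spaced :: "nat \<Rightarrow> ('a \<times> int \<times> int) list \<Rightarrow> bool" where
  "spaced D \<xi> \<longleftrightarrow> (\<forall>i. i + 1 < length \<xi> \<longrightarrow>
       fst (snd (\<xi> ! (i + 1))) - snd (snd (\<xi> ! i)) \<ge> int D)"

definition traces :: "'a::metric_space set \<Rightarrow> ('a \<Rightarrow> 'a) \<Rightarrow> real \<Rightarrow> 'a \<Rightarrow> ('a \<times> int \<times> int) list \<Rightarrow> bool" where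
  "traces X T \<eta> x \<xi> \<longleftrightarrow> (\<forall>i < length \<xi>. \<forall>j \<in> {fst (snd (\<xi> ! i)) .. snd (snd (\<xi> ! i))}.
       dist (zit X T j x) (zit X T j (fst (\<xi> ! i))) < \<eta>)"

definition periodic_specification :: "'a::metric_space set \<Rightarrow> ('a \<Rightarrow> 'a) \<Rightarrow> bool" where
  "periodic_specification X T \<longleftrightarrow> (\<forall>\<eta>>0. \<exists>D::nat. \<forall>\<xi>. is_spec X \<xi> \<and> spaced D \<xi> \<longrightarrow>
      (\<exists>x'\<in>X. traces X T \<eta> x' \<xi> \<and>
         zit X T (snd (snd (last \<xi>)) - fst (snd (hd \<xi>)) + int D) x' = x'))"

definition avg :: "('a \<Rightarrow> 'a) \<Rightarrow> ('b \<Rightarrow> 'b) \<Rightarrow> ('a \<times> 'b \<Rightarrow> real) \<Rightarrow> nat \<Rightarrow> 'a \<Rightarrow> 'b \<Rightarrow> real" where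
  "avg T S f k x y = (\<Sum>j<k. f ((T ^^ j) x, (S ^^ j) y)) / real k"

definition Rset :: "'a set \<Rightarrow> ('a \<Rightarrow> 'a) \<Rightarrow> 'b set \<Rightarrow> ('b \<Rightarrow> 'b) \<Rightarrow> ('a \<times> 'b \<Rightarrow> real) \<Rightarrow> ('a \<times> 'b) set" where
  "Rset X T Y S f = {(x, y). x \<in> X \<and> y \<in> Y \<and> convergent (\<lambda>k. avg T S f k x y)}"

definition beta :: "'a set \<Rightarrow> ('a \<Rightarrow> 'a) \<Rightarrow> 'b set \<Rightarrow> ('b \<Rightarrow> 'b) \<Rightarrow> ('a \<times> 'b \<Rightarrow> real) \<Rightarrow> real" where
  "beta X T Y S f = (SUP y \<in> snd ` Rset X T Y S f.
      INF x \<in> {x. (x, y) \<in> Rset X T Y S f}. lim (\<lambda>k. avg T S f k x y))"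

definition delta :: "'a set \<Rightarrow> ('a \<Rightarrow> 'a) \<Rightarrow> 'b set \<Rightarrow> ('b \<Rightarrow> 'b) \<Rightarrow> ('a \<times> 'b \<Rightarrow> real) \<Rightarrow> ereal" where
  "delta X T Y S f = limsup (\<lambda>k. ereal (SUP y \<in> Y. INF x \<in> X. avg T S f k x y))"

end

theory Submission
  imports Defs
begin


lemma sum_split_add: "(\<Sum>i<n+p. (g::nat\<Rightarrow>real) i) = (\<Sum>i<n. g i) + (\<Sum>i<p. g (n+i))"
  by (induction p) (simp_all add: add.assoc)

lemma periodic_shift_sum:
  assumes "\<And>i. (g::nat\<Rightarrow>real) (i+P) = g i"
  shows "(\<Sum>i<P. g (n+i)) = (\<Sum>i<P. g i)"
proof (induction n)
  case (Suc n)
  have "(\<Sum>i<Suc P. g (n+i)) = g n + (\<Sum>i<P. g (Suc n+i))"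
    by (subst sum.lessThan_Suc_shift) simp
  moreover have "(\<Sum>i<Suc P. g (n+i)) = (\<Sum>i<P. g (n+i)) + g (n + P)" by simp
  ultimately show ?case using Suc assms[of n] by (simp add: add.commute)
qed simp

lemma periodic_cesaro:
  assumes P: "P \<ge> 1" and per: "\<And>i. (g::nat\<Rightarrow>real) (i+P) = g i"
  shows "convergent (\<lambda>n. (\<Sum>i<n. g i) / real n)"
proof -
  define A where "A = (\<Sum>i<P. g i) / real P"
  define h where "h n = (\<Sum>i<n. g i - A)" for n
  have hP: "h (n + P) = h n" for n
  proof -
    have "h (n+P) = h n + (\<Sum>i<P. g (n+i) - A)"
      unfolding h_def by (rule sum_split_add)
    also have "(\<Sum>i<P. g (n+i) - A) = (\<Sum>i<P. g i) - real P * A"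
      by (simp add: sum_subtractf periodic_shift_sum[of g P, OF per])
    also have "\<dots> = 0" using P by (simp add: A_def)
    finally show ?thesis by simp
  qed
  have hm: "h (r + m * P) = h r" for r m
    by (induction m) (simp_all add: add.assoc[symmetric] hP add.commute[of P])
  have hmod: "h n = h (n mod P)" for n
    using hm[of "n mod P" "n div P"] by simp
  define B where "B = (\<Sum>i<P. \<bar>h i\<bar>)"
  have hB: "\<bar>h n\<bar> \<le> B" for n
  proof -
    have "n mod P < P" using P by simp
    then have "\<bar>h (n mod P)\<bar> \<le> B" unfolding B_def
      by (intro member_le_sum) auto
    then show ?thesis using hmod by simp
  qed
  have "(\<lambda>n. h n / real n) \<longlonglongrightarrow> 0"
  proof (rule Lim_null_comparison)
    show "\<forall>\<^sub>F n in sequentially. norm (h n / real n) \<le> B / real n"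
      using hB by (auto intro!: always_eventually divide_right_mono simp: abs_div)
    show "(\<lambda>n. B / real n) \<longlonglongrightarrow> 0" by (rule lim_const_over_n)
  qed
  then have "(\<lambda>n. A + h n / real n) \<longlonglongrightarrow> A + 0" by (intro tendsto_add) auto
  moreover have "\<forall>\<^sub>F n in sequentially. A + h n / real n = (\<Sum>i<n. g i) / real n"
  proof (rule eventually_sequentiallyI[of 1])
    fix n :: nat assume "n \<ge> 1"
    have "h n = (\<Sum>i<n. g i) - real n * A" by (simp add: h_def sum_subtractf)
    then show "A + h n / real n = (\<Sum>i<n. g i) / real n" using \<open>n \<ge> 1\<close>
      by (simp add: field_simps)
  qed
  ultimately have "(\<lambda>n. (\<Sum>i<n. g i) / real n) \<longlonglongrightarrow> A"
    by (simp add: tendsto_cong)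
  then show ?thesis by (auto simp: convergent_def)
qed

lemma funpow_fix_mult: "(T ^^ q) x = x \<Longrightarrow> (T ^^ (q * m)) x = x"
  by (induction m) (simp_all add: funpow_add)

lemma orbit_in: "(\<And>x. x \<in> X \<Longrightarrow> T x \<in> X) \<Longrightarrow> x \<in> X \<Longrightarrow> (T ^^ m) x \<in> X"
  by (induction m) auto

lemma block_sum:
  assumes TX: "\<And>x. x \<in> X \<Longrightarrow> T x \<in> X"
    and c: "\<And>x. x \<in> X \<Longrightarrow> c \<le> (\<Sum>i<p. (f::'a\<times>'b\<Rightarrow>real) ((T^^i) x, (S^^i) y))"
    and Sp: "(S ^^ p) y = y" and x: "x \<in> X"
  shows "real n * c \<le> (\<Sum>i<n*p. f ((T^^i) x, (S^^i) y))"
proof (induction n)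
  case (Suc n)
  have TnX: "(T ^^ (n*p)) x \<in> X" by (rule orbit_in[OF TX x])
  have Sn: "(S ^^ (p*n)) y = y" by (rule funpow_fix_mult[OF Sp])
  have "(\<Sum>i<Suc n*p. f ((T^^i) x, (S^^i) y)) =
        (\<Sum>i<n*p. f ((T^^i) x, (S^^i) y)) + (\<Sum>i<p. f ((T^^(n*p+i)) x, (S^^(n*p+i)) y))"
    using sum_split_add[of "\<lambda>i. f ((T^^i) x, (S^^i) y)" "n*p" p] by (simp add: add.commute)
  also have "(\<Sum>i<p. f ((T^^(n*p+i)) x, (S^^(n*p+i)) y)) = (\<Sum>i<p. f ((T^^i) ((T^^(n*p)) x), (S^^i) y))"
  proof (rule sum.cong[OF refl])
    fix i
    have "(T^^(n*p+i)) x = (T^^i) ((T^^(n*p)) x)" by (simp add: funpow_add add.commute)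
    moreover have "(S^^(n*p+i)) y = (S^^i) y"
      using Sn by (simp add: funpow_add add.commute mult.commute)
    ultimately show "f ((T^^(n*p+i)) x, (S^^(n*p+i)) y) = f ((T^^i) ((T^^(n*p)) x), (S^^i) y)" by simp
  qed
  finally show ?case using Suc c[OF TnX] by (simp add: algebra_simps)
qed simp


theorem theorem2p15:
  fixes X :: "'a::metric_space set" and T :: "'a \<Rightarrow> 'a"
    and Y :: "'b::metric_space set" and S :: "'b \<Rightarrow> 'b"
    and f :: "'a \<times> 'b \<Rightarrow> real"
  assumes "tds X T" and "tds Y S"
    and "continuous_on (X \<times> Y) f"
    and "periodic_specification Y S"
    and "has_periodic_point X T"
  shows "ereal (beta X T Y S f) \<ge> delta X T Y S f"
proof -
  obtain gT where hT: "homeomorphism X X T gT" and cX: "compact X" and neX: "X \<noteq> {}"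
    using assms(1) unfolding tds_def by blast
  obtain gS where hS: "homeomorphism Y Y S gS" and cY: "compact Y" and neY: "Y \<noteq> {}"
    using assms(2) unfolding tds_def by blast
  have TX: "T x \<in> X" if "x \<in> X" for x using hT that unfolding homeomorphism_def by blast
  have SY: "S y \<in> Y" if "y \<in> Y" for y using hS that unfolding homeomorphism_def by blast
  have cXY: "compact (X \<times> Y)" using cX cY by (rule compact_Times)
  have "bounded (f ` (X \<times> Y))"
    by (intro compact_imp_bounded compact_continuous_image assms(3) cXY)
  then obtain M0 where M0: "\<And>z. z \<in> X \<times> Y \<Longrightarrow> norm (f z) \<le> M0"
    unfolding bounded_iff by blast
  define M where "M = max M0 0"
  have M: "\<bar>f (x, y)\<bar> \<le> M" if "x \<in> X" "y \<in> Y" for x y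
    using M0[of "(x,y)"] that by (auto simp: M_def)
  have M0le: "0 \<le> M" by (simp add: M_def)
  have fo: "\<bar>f ((T^^i) x, (S^^i) y)\<bar> \<le> M" if "x \<in> X" "y \<in> Y" for x y i
    using M[OF orbit_in[of X T, OF TX that(1)] orbit_in[of Y S, OF SY that(2)]] by simp
  have avgM: "\<bar>avg T S f k x y\<bar> \<le> M" if "x \<in> X" "y \<in> Y" for x y k
  proof (cases "k = 0")
    case True then show ?thesis using M0le by (simp add: avg_def)
  next
    case False
    have "\<bar>\<Sum>j<k. f ((T ^^ j) x, (S ^^ j) y)\<bar> \<le> (\<Sum>j<k. \<bar>f ((T ^^ j) x, (S ^^ j) y)\<bar>)"
      by (rule sum_abs)
    also have "\<dots> \<le> (\<Sum>j<k. M)" by (intro sum_mono fo that)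
    finally show ?thesis using False by (simp add: avg_def abs_div field_simps)
  qed
  define R where "R = Rset X T Y S f"
  define Inn where "Inn y = (INF x \<in> {x. (x, y) \<in> R}. lim (\<lambda>k. avg T S f k x y))" for y
  have limM: "\<bar>lim (\<lambda>k. avg T S f k x y)\<bar> \<le> M" if "(x, y) \<in> R" for x y
  proof -
    from that have xy: "x \<in> X" "y \<in> Y" "convergent (\<lambda>k. avg T S f k x y)"
      by (auto simp: R_def Rset_def)
    then have L: "(\<lambda>k. avg T S f k x y) \<longlonglongrightarrow> lim (\<lambda>k. avg T S f k x y)"
      by (simp add: convergent_LIMSEQ_iff)
    have ab: "-M \<le> avg T S f k x y" "avg T S f k x y \<le> M" for k
      using avgM[OF xy(1,2), of k] by (simp_all add: abs_le_iff)
    have "lim (\<lambda>k. avg T S f k x y) \<le> M"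
      by (rule tendsto_upperbound[OF L]) (simp_all add: ab)
    moreover have "lim (\<lambda>k. avg T S f k x y) \<ge> -M"
      by (rule tendsto_lowerbound[OF L]) (simp_all add: ab)
    ultimately show ?thesis by auto
  qed
  have bddI: "bdd_below ((\<lambda>x. lim (\<lambda>k. avg T S f k x y)) ` {x. (x, y) \<in> R})" for y
  proof (rule bdd_belowI[of _ "-M"])
    fix v assume "v \<in> (\<lambda>x. lim (\<lambda>k. avg T S f k x y)) ` {x. (x, y) \<in> R}"
    then obtain x where "(x, y) \<in> R" "v = lim (\<lambda>k. avg T S f k x y)" by blast
    then show "-M \<le> v" using limM[of x y] by linarith
  qed
  have InnM: "Inn y \<le> M" if "y \<in> snd ` R" for y
  proof -
    from that obtain x where "(x, y) \<in> R" by force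
    then have "Inn y \<le> lim (\<lambda>k. avg T S f k x y)" unfolding Inn_def
      by (intro cINF_lower bddI) auto
    also have "\<dots> \<le> M" using limM[OF \<open>(x, y) \<in> R\<close>] by auto
    finally show ?thesis .
  qed
  have beta_eq: "beta X T Y S f = (SUP y \<in> snd ` R. Inn y)"
    by (simp add: beta_def R_def Inn_def)
  have betaI: "Inn y \<le> beta X T Y S f" if "y \<in> snd ` R" for y
    unfolding beta_eq using InnM by (intro cSUP_upper that) (auto intro!: bdd_aboveI[of _ M])
  obtain x0 q where x0: "x0 \<in> X" "q \<ge> 1" "(T ^^ q) x0 = x0"
    using assms(5) unfolding has_periodic_point_def by blast
  define \<beta> where "\<beta> = beta X T Y S f"
  define m where "m k y = (INF x \<in> X. avg T S f k x y)" for k y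
  have bddX: "bdd_below ((\<lambda>x. avg T S f k x y) ` X)" if "y \<in> Y" for k y
  proof (rule bdd_belowI[of _ "-M"])
    fix v assume "v \<in> (\<lambda>x. avg T S f k x y) ` X"
    then obtain x where "x \<in> X" "v = avg T S f k x y" by blast
    then show "-M \<le> v" using avgM[of x y k] that by linarith
  qed
  have key: "\<exists>D::nat. \<forall>k\<ge>1. \<forall>y\<in>Y. real k * m k y \<le> real (k + D) * \<beta> + real D * M + real k * \<epsilon>"
    if "\<epsilon> > 0" for \<epsilon>
  proof -
    have "uniformly_continuous_on (X \<times> Y) f"
      by (rule compact_uniformly_continuous[OF assms(3) cXY])
    then obtain \<eta> where \<eta>: "\<eta> > 0"
      and uc: "\<And>z z'. z \<in> X \<times> Y \<Longrightarrow> z' \<in> X \<times> Y \<Longrightarrow> dist z' z < \<eta> \<Longrightarrow> dist (f z') (f z) < \<epsilon>"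
      unfolding uniformly_continuous_on_def using \<open>\<epsilon> > 0\<close> by metis
    obtain D :: nat where D: "\<And>\<xi>. is_spec Y \<xi> \<and> spaced D \<xi> \<Longrightarrow> (\<exists>x'\<in>Y. traces Y S \<eta> x' \<xi> \<and>
         zit Y S (snd (snd (last \<xi>)) - fst (snd (hd \<xi>)) + int D) x' = x')"
      using assms(4) \<eta> unfolding periodic_specification_def by blast
    show ?thesis
    proof (intro exI allI impI ballI)
      fix k :: nat and y assume k: "k \<ge> 1" and y: "y \<in> Y"
      define \<xi> where "\<xi> = [(y, 0::int, int k)]"
      have "is_spec Y \<xi> \<and> spaced D \<xi>" by (simp add: \<xi>_def is_spec_def spaced_def y)
      from D[OF this] obtain y' where y': "y' \<in> Y" and tr: "traces Y S \<eta> y' \<xi>"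
        and per0: "zit Y S (snd (snd (last \<xi>)) - fst (snd (hd \<xi>)) + int D) y' = y'" by blast
      define p where "p = k + D"
      have p1: "p \<ge> 1" using k by (simp add: p_def)
      have per: "(S ^^ p) y' = y'" using per0
        by (simp add: \<xi>_def zit_def p_def nat_add_distrib)
      have close: "dist ((S^^i) y') ((S^^i) y) < \<eta>" if "i \<le> k" for i
      proof -
        have "int i \<in> {0 .. int k}" using that by simp
        then have "dist (zit Y S (int i) y') (zit Y S (int i) y) < \<eta>"
          using tr unfolding traces_def \<xi>_def by fastforce
        then show ?thesis by (simp add: zit_def)
      qed
      define c where "c = real k * m k y - real k * \<epsilon> - real D * M"
      have csum: "c \<le> (\<Sum>i<p. f ((T^^i) x, (S^^i) y'))" if x: "x \<in> X" for x
      proof -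
        have "m k y \<le> avg T S f k x y" unfolding m_def by (rule cINF_lower[OF bddX[OF y] x])
        then have 1: "real k * m k y \<le> (\<Sum>j<k. f ((T ^^ j) x, (S ^^ j) y))"
          using k by (simp add: avg_def field_simps)
        have 2: "f ((T ^^ j) x, (S ^^ j) y) \<le> f ((T ^^ j) x, (S ^^ j) y') + \<epsilon>" if "j < k" for j
        proof -
          have in1: "((T ^^ j) x, (S ^^ j) y) \<in> X \<times> Y" and in2: "((T ^^ j) x, (S ^^ j) y') \<in> X \<times> Y"
            using orbit_in[of X T, OF TX x] orbit_in[of Y S, OF SY y] orbit_in[of Y S, OF SY y'] by auto
          have "dist ((T ^^ j) x, (S ^^ j) y') ((T ^^ j) x, (S ^^ j) y) < \<eta>"
            using close[of j] that by (simp add: dist_Pair_Pair)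
          from uc[OF in1 in2 this] show ?thesis by (simp add: dist_real_def)
        qed
        have 3: "(\<Sum>j<k. f ((T ^^ j) x, (S ^^ j) y)) \<le> (\<Sum>j<k. f ((T ^^ j) x, (S ^^ j) y')) + real k * \<epsilon>"
          using sum_mono[of "{..<k}", OF 2] by (simp add: sum.distrib)
        have 4: "- (real D * M) \<le> (\<Sum>i<D. f ((T^^(k+i)) x, (S^^(k+i)) y'))"
        proof -
          have "(\<Sum>i<D. - M) \<le> (\<Sum>i<D. f ((T^^(k+i)) x, (S^^(k+i)) y'))"
          proof (rule sum_mono)
            fix i show "- M \<le> f ((T^^(k+i)) x, (S^^(k+i)) y')"
              using fo[OF x y', of "k+i"] by linarith
          qed
          then show ?thesis by simp
        qed
        have 5: "(\<Sum>i<p. f ((T^^i) x, (S^^i) y')) = (\<Sum>j<k. f ((T ^^ j) x, (S ^^ j) y')) + (\<Sum>i<D. f ((T^^(k+i)) x, (S^^(k+i)) y'))"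
          unfolding p_def by (rule sum_split_add)
        show ?thesis using 1 3 4 5 by (simp add: c_def)
      qed
      have "Inn y' \<ge> c / real p"
      proof -
        have x0R: "(x0, y') \<in> R"
        proof -
          have "convergent (\<lambda>n. (\<Sum>i<n. f ((T^^i) x0, (S^^i) y')) / real n)"
          proof (rule periodic_cesaro[of "q*p"])
            show "1 \<le> q * p" using x0(2) p1 by simp
            fix i
            have "(T^^(i + q*p)) x0 = (T^^i) x0"
              using funpow_fix_mult[OF x0(3), of p] by (simp add: funpow_add)
            moreover have "(S^^(i + q*p)) y' = (S^^i) y'"
              using funpow_fix_mult[OF per, of q] by (simp add: funpow_add mult.commute)
            ultimately show "f ((T^^(i + q*p)) x0, (S^^(i + q*p)) y') = f ((T^^i) x0, (S^^i) y')" by simp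
          qed
          then show ?thesis using x0(1) y' by (simp add: R_def Rset_def avg_def)
        qed
        show ?thesis unfolding Inn_def
        proof (rule cINF_greatest)
          show "{x. (x, y') \<in> R} \<noteq> {}" using x0R by blast
          fix x assume "x \<in> {x. (x, y') \<in> R}"
          then have xR: "(x, y') \<in> R" by simp
          then have xX: "x \<in> X" and cv: "convergent (\<lambda>k. avg T S f k x y')"
            by (auto simp: R_def Rset_def)
          then have L: "(\<lambda>k. avg T S f k x y') \<longlonglongrightarrow> lim (\<lambda>k. avg T S f k x y')"
            by (simp add: convergent_LIMSEQ_iff)
          have sm: "strict_mono (\<lambda>n. Suc n * p)" using p1 by (intro strict_monoI) simp
          have L2: "((\<lambda>k. avg T S f k x y') \<circ> (\<lambda>n. Suc n * p)) \<longlonglongrightarrow> lim (\<lambda>k. avg T S f k x y')"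
            by (rule LIMSEQ_subseq_LIMSEQ[OF L sm])
          show "c / real p \<le> lim (\<lambda>k. avg T S f k x y')"
          proof (rule tendsto_lowerbound[OF L2], rule always_eventually, rule allI)
            fix n
            have b: "real (Suc n) * c \<le> (\<Sum>i<Suc n*p. f ((T^^i) x, (S^^i) y'))"
              by (rule block_sum[where X=X and T=T, OF TX csum per xX])
            have "c / real p = (real (Suc n) * c) / (real (Suc n) * real p)" by simp
            also have "\<dots> \<le> (\<Sum>i<Suc n*p. f ((T^^i) x, (S^^i) y')) / (real (Suc n) * real p)"
              using b p1 by (intro divide_right_mono) auto
            finally show "c / real p \<le> ((\<lambda>k. avg T S f k x y') \<circ> (\<lambda>n. Suc n * p)) n"
              by (simp add: avg_def distrib_right)
          qed simp
        qed
      qed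
      moreover have "y' \<in> snd ` R"
      proof -
        have "(x0, y') \<in> R"
        proof -
          have "convergent (\<lambda>n. (\<Sum>i<n. f ((T^^i) x0, (S^^i) y')) / real n)"
          proof (rule periodic_cesaro[of "q*p"])
            show "1 \<le> q * p" using x0(2) p1 by simp
            fix i
            have "(T^^(i + q*p)) x0 = (T^^i) x0"
              using funpow_fix_mult[OF x0(3), of p] by (simp add: funpow_add)
            moreover have "(S^^(i + q*p)) y' = (S^^i) y'"
              using funpow_fix_mult[OF per, of q] by (simp add: funpow_add mult.commute)
            ultimately show "f ((T^^(i + q*p)) x0, (S^^(i + q*p)) y') = f ((T^^i) x0, (S^^i) y')" by simp
          qed
          then show ?thesis using x0(1) y' by (simp add: R_def Rset_def avg_def)
        qed
        then show ?thesis by force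
      qed
      ultimately have "c / real p \<le> \<beta>" using betaI unfolding \<beta>_def by force
      then have "c \<le> real p * \<beta>" using p1 by (simp add: field_simps)
      then show "real k * m k y \<le> real (k + D) * \<beta> + real D * M + real k * \<epsilon>"
        by (simp add: c_def p_def)
    qed
  qed
  have main: "delta X T Y S f \<le> ereal \<beta> + ereal e" if "e > 0" for e
  proof -
    define \<epsilon> where "\<epsilon> = e / 2"
    have \<epsilon>: "\<epsilon> > 0" using that by (simp add: \<epsilon>_def)
    obtain D :: nat where D: "\<And>k y. k \<ge> 1 \<Longrightarrow> y \<in> Y \<Longrightarrow> real k * m k y \<le> real (k + D) * \<beta> + real D * M + real k * \<epsilon>"
      using key[OF \<epsilon>] by blast
    define E where "E = real D * (\<bar>\<beta>\<bar> + M)"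
    obtain K :: nat where K: "E / \<epsilon> \<le> real K" using real_arch_simple by blast
    have ev: "\<forall>\<^sub>F k in sequentially. ereal (SUP y \<in> Y. INF x \<in> X. avg T S f k x y) \<le> ereal (\<beta> + e)"
    proof (rule eventually_sequentiallyI[of "K + 1"])
      fix k assume kK: "K + 1 \<le> k"
      then have k1: "k \<ge> 1" by simp
      have "E \<le> real K * \<epsilon>" using K \<epsilon> by (simp add: field_simps)
      also have "\<dots> \<le> real k * \<epsilon>" using kK \<epsilon> by (intro mult_right_mono) auto
      finally have Ek: "E \<le> real k * \<epsilon>" .
      have "m k y \<le> \<beta> + e" if y: "y \<in> Y" for y
      proof -
        have "real k * m k y \<le> real (k + D) * \<beta> + real D * M + real k * \<epsilon>" by (rule D[OF k1 y])
        also have "\<dots> = real k * \<beta> + real D * \<beta> + real D * M + real k * \<epsilon>" by (simp add: algebra_simps)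
        also have "real D * \<beta> \<le> real D * \<bar>\<beta>\<bar>" by (intro mult_left_mono) auto
        then have "real k * \<beta> + real D * \<beta> + real D * M + real k * \<epsilon> \<le> real k * \<beta> + E + real k * \<epsilon>"
          by (simp add: E_def algebra_simps)
        also have "\<dots> \<le> real k * (\<beta> + e)" using Ek by (simp add: \<epsilon>_def algebra_simps)
        finally show ?thesis using k1 by (simp add: mult_le_cancel_left_pos)
      qed
      then have "(SUP y \<in> Y. m k y) \<le> \<beta> + e" using neY by (intro cSUP_least) auto
      then show "ereal (SUP y \<in> Y. INF x \<in> X. avg T S f k x y) \<le> ereal (\<beta> + e)"
        by (simp add: m_def)
    qed
    have "delta X T Y S f \<le> ereal (\<beta> + e)"
      unfolding delta_def by (rule Limsup_bounded[OF ev])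
    then show ?thesis by simp
  qed
  show ?thesis unfolding \<beta>_def[symmetric] by (rule ereal_le_epsilon2) (use main in auto)
qed

end
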